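(* If $G$ is a 3-symmetric graph on $n\ge 3$ vertices, then $n\equiv 0,1,$ or $8 \pmod{16}$. In particular no 3-symmetric graph has $n$ vertices for $3\le n\le 7$.
   Context: All graphs are finite and simple. For a graph $G$ on $n$ vertices and a graph $H$ on $k$ vertices, the density $t(H,G)$ is the number of $k$-element subsets $S\subseteq V(G)$ whose induced subgraph $G[S]$ is isomorphic to $H$, divided by $\binom{n}{k}$. A graph $G$ with $n\ge 3$ vertices is 3-symmetric if $t(K_3,G)=1/8$, $t(P_3,G)=3/8$, $t(K_2\cup K_1,G)=3/8$ and $t(\overline{K_3},G)=1/8$, where $K_3$ is the triangle, $P_3$ is the path with 3 vertices and 2 edges, $K_2\cup K_1$ is the 3-vertex graph with exactly one edge, and $\overline{K_3}$ is the 3-vertex graph with no edges. *)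

theory Defs
  imports Complex_Main
begin

definition simple_graph :: "'a set \<Rightarrow> ('a \<Rightarrow> 'a \<Rightarrow> bool) \<Rightarrow> bool" where
  "simple_graph V E \<longleftrightarrow> finite V \<and> (\<forall>x\<in>V. \<forall>y\<in>V. E x y \<longrightarrow> E y x) \<and> (\<forall>x\<in>V. \<not> E x x)"

definition induced_iso :: "('a \<Rightarrow> 'a \<Rightarrow> bool) \<Rightarrow> 'a set \<Rightarrow> 'b set \<Rightarrow> ('b \<Rightarrow> 'b \<Rightarrow> bool) \<Rightarrow> bool" where
  "induced_iso E S W F \<longleftrightarrow>
     (\<exists>f. bij_betw f S W \<and> (\<forall>x\<in>S. \<forall>y\<in>S. E x y \<longleftrightarrow> F (f x) (f y)))"

definition density :: "'b set \<Rightarrow> ('b \<Rightarrow> 'b \<Rightarrow> bool) \<Rightarrow> 'a set \<Rightarrow> ('a \<Rightarrow> 'a \<Rightarrow> bool) \<Rightarrow> real" where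
  "density W F V E =
     real (card {S. S \<subseteq> V \<and> card S = card W \<and> induced_iso E S W F})
     / real (card V choose card W)"

definition V3 :: "nat set" where "V3 = {0, 1, 2}"

definition K3_edges :: "nat \<Rightarrow> nat \<Rightarrow> bool" where
  "K3_edges x y \<longleftrightarrow> x \<noteq> y"

definition P3_edges :: "nat \<Rightarrow> nat \<Rightarrow> bool" where
  "P3_edges x y \<longleftrightarrow> {x, y} = {0, 1} \<or> {x, y} = {1, 2}"

definition K2K1_edges :: "nat \<Rightarrow> nat \<Rightarrow> bool" where
  "K2K1_edges x y \<longleftrightarrow> {x, y} = {0, 1} \<and> x \<noteq> y"

definition empty_edges :: "nat \<Rightarrow> nat \<Rightarrow> bool" where
  "empty_edges x y \<longleftrightarrow> False"

definition three_symmetric :: "'a set \<Rightarrow> ('a \<Rightarrow> 'a \<Rightarrow> bool) \<Rightarrow> bool" where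
  "three_symmetric V E \<longleftrightarrow> card V \<ge> 3 \<and>
     density V3 K3_edges V E = 1/8 \<and>
     density V3 P3_edges V E = 3/8 \<and>
     density V3 K2K1_edges V E = 3/8 \<and>
     density V3 empty_edges V E = 1/8"

end

theory Submission
  imports Defs
begin

lemma card_V3[simp]: "card V3 = 3" by (simp add: V3_def)

definition ecount :: "('b \<Rightarrow> 'b \<Rightarrow> bool) \<Rightarrow> 'b set \<Rightarrow> nat" where
 "ecount E S = card {p \<in> S \<times> S. E (fst p) (snd p)}"

lemma iso_ecount:
  assumes "induced_iso E S W F"
  shows "ecount E S = ecount F W"
proof -
  from assms obtain f where f: "bij_betw f S W" "\<forall>x\<in>S. \<forall>y\<in>S. E x y \<longleftrightarrow> F (f x) (f y)"
    unfolding induced_iso_def by blast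
  let ?g = "map_prod f f"
  have inj: "inj_on ?g (S \<times> S)" using f(1) by (auto simp: bij_betw_def inj_on_def)
  have img: "?g ` {p \<in> S \<times> S. E (fst p) (snd p)} = {q \<in> W \<times> W. F (fst q) (snd q)}"
  proof
    show "?g ` {p \<in> S \<times> S. E (fst p) (snd p)} \<subseteq> {q \<in> W \<times> W. F (fst q) (snd q)}"
      using f by (auto simp: bij_betw_def)
  next
    show "{q \<in> W \<times> W. F (fst q) (snd q)} \<subseteq> ?g ` {p \<in> S \<times> S. E (fst p) (snd p)}"
    proof
      fix q assume q: "q \<in> {q \<in> W \<times> W. F (fst q) (snd q)}"
      then obtain a b where ab: "q = (a,b)" "a \<in> W" "b \<in> W" "F a b" by auto
      obtain x where x: "x \<in> S" "f x = a" using f(1) ab(2) by (auto simp: bij_betw_def)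
      obtain y where y: "y \<in> S" "f y = b" using f(1) ab(3) by (auto simp: bij_betw_def)
      have "E x y" using f(2) x y ab by auto
      then show "q \<in> ?g ` {p \<in> S \<times> S. E (fst p) (snd p)}" using x y ab by force
    qed
  qed
  have "ecount E S = card (?g ` {p \<in> S \<times> S. E (fst p) (snd p)})"
    unfolding ecount_def by (rule card_image[symmetric]) (rule inj_on_subset[OF inj], auto)
  also have "\<dots> = ecount F W" by (simp only: img ecount_def)
  finally show ?thesis .
qed

lemma ec_K3: "ecount K3_edges V3 = 6"
proof -
  have "{p \<in> V3 \<times> V3. K3_edges (fst p) (snd p)} = {(0,1),(0,2),(1,0),(1,2),(2,0),(2,1)}"
    by (auto simp: V3_def K3_edges_def)
  then show ?thesis by (simp add: ecount_def)
qed

lemma ec_P3: "ecount P3_edges V3 = 4"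
proof -
  have "{p \<in> V3 \<times> V3. P3_edges (fst p) (snd p)} = {(0,1),(1,0),(1,2),(2,1)}"
    by (auto simp: V3_def P3_edges_def doubleton_eq_iff)
  then show ?thesis by (simp add: ecount_def)
qed

lemma ec_K2K1: "ecount K2K1_edges V3 = 2"
proof -
  have "{p \<in> V3 \<times> V3. K2K1_edges (fst p) (snd p)} = {(0,1),(1,0)}"
    by (auto simp: V3_def K2K1_edges_def doubleton_eq_iff)
  then show ?thesis by (simp add: ecount_def)
qed

lemma ec_empty: "ecount empty_edges V3 = 0"
  by (simp add: ecount_def empty_edges_def)

lemma count3:
  assumes "finite V" "x \<in> V" "y \<in> V" "x \<noteq> y"
  shows "card {S. (S \<subseteq> V \<and> card S = 3) \<and> (x,y) \<in> S \<times> S} = card V - 2"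
proof -
  have eq: "{S. (S \<subseteq> V \<and> card S = 3) \<and> (x,y) \<in> S \<times> S} = (\<lambda>z. insert z {x,y}) ` (V - {x,y})"
  proof
    show "{S. (S \<subseteq> V \<and> card S = 3) \<and> (x,y) \<in> S \<times> S} \<subseteq> (\<lambda>z. insert z {x,y}) ` (V - {x,y})"
    proof
      fix S assume "S \<in> {S. (S \<subseteq> V \<and> card S = 3) \<and> (x,y) \<in> S \<times> S}"
      hence S: "S \<subseteq> V" "card S = 3" "x \<in> S" "y \<in> S" by auto
      have "card (S - {x,y}) = 1" using S assms(4) finite_subset[OF S(1) assms(1)]
        by (simp add: card_Diff_subset)
      then obtain z where z: "S - {x,y} = {z}" by (auto simp: card_1_singleton_iff)
      hence "S = insert z {x,y}" using S by auto
      moreover have "z \<in> V - {x,y}" using z S by auto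
      ultimately show "S \<in> (\<lambda>z. insert z {x,y}) ` (V - {x,y})" by auto
    qed
  next
    show "(\<lambda>z. insert z {x,y}) ` (V - {x,y}) \<subseteq> {S. (S \<subseteq> V \<and> card S = 3) \<and> (x,y) \<in> S \<times> S}"
      using assms by (auto simp: card_insert_if)
  qed
  have inj: "inj_on (\<lambda>z. insert z {x,y}) (V - {x,y})" by (auto simp: inj_on_def)
  show ?thesis unfolding eq using card_image[OF inj] assms by (simp add: card_Diff_subset)
qed

lemma even_edges:
  assumes "finite V" "\<forall>x\<in>V. \<forall>y\<in>V. E x y \<longrightarrow> E y x" "\<forall>x\<in>V. \<not>E x x"
  shows "even (card {p \<in> V \<times> V. E (fst p) (snd p)})"
proof -
  obtain g :: "'a \<Rightarrow> nat" and m where g: "g ` V = {i. i < m}" "inj_on g V"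
    using finite_imp_inj_to_nat_seg[OF assms(1)] by blast
  define A where "A = {p \<in> V \<times> V. E (fst p) (snd p)}"
  define A1 where "A1 = {p \<in> A. g (fst p) < g (snd p)}"
  define A2 where "A2 = {p \<in> A. g (snd p) < g (fst p)}"
  have finA: "finite A" unfolding A_def using assms(1) by auto
  have U: "A = A1 \<union> A2"
  proof -
    have "g (fst p) \<noteq> g (snd p)" if "p \<in> A" for p
    proof -
      from that have p: "fst p \<in> V" "snd p \<in> V" "E (fst p) (snd p)" unfolding A_def by auto
      then have "fst p \<noteq> snd p" using assms(3) by metis
      then show ?thesis using inj_on_eq_iff[OF g(2) p(1) p(2)] by simp
    qed
    then show ?thesis unfolding A1_def A2_def by (auto simp: linorder_neq_iff)
  qed
  have D: "A1 \<inter> A2 = {}" unfolding A1_def A2_def by auto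
  have S: "A2 = prod.swap ` A1"
  proof
    show "A2 \<subseteq> prod.swap ` A1"
    proof
      fix p assume p: "p \<in> A2"
      then have "prod.swap p \<in> A1" using assms(2) unfolding A1_def A2_def A_def by auto
      then show "p \<in> prod.swap ` A1" by (metis image_eqI swap_swap)
    qed
  next
    show "prod.swap ` A1 \<subseteq> A2" using assms(2) unfolding A1_def A2_def A_def by auto
  qed
  have f1: "finite A1" "finite A2" using finA unfolding A1_def A2_def by auto
  have c: "card A = card A1 + card A2" unfolding U using f1 D by (rule card_Un_disjoint)
  have inj: "inj_on prod.swap A1" by (rule inj_swap)
  have "card A2 = card A1" unfolding S using inj by (rule card_image)
  then have "card A = 2 * card A1" using c by simp
  then show ?thesis unfolding A_def by simp
qed

lemma choose3: "6 * ((m+3) choose 3) = (m+3)*(m+2)*(m+1)"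
proof -
  have a: "fact 3 * fact m * ((m+3) choose 3) = (fact (m+3) :: nat)"
    using binomial_fact_lemma[of 3 "m+3"] by simp
  have f3: "(fact 3 :: nat) = 6" by (simp add: numeral_3_eq_3)
  have "m+3 = Suc (Suc (Suc m))" by simp
  then have "(fact (m+3) :: nat) = Suc (Suc (Suc m)) * (Suc (Suc m) * (Suc m * fact m))"
    by (simp only: fact_Suc of_nat_id)
  also have "\<dots> = fact m * ((m+3)*(m+2)*(m+1))" by (simp add: algebra_simps)
  finally have "fact m * (6 * ((m+3) choose 3)) = fact m * ((m+3)*(m+2)*(m+1))"
    using a f3 by (simp add: algebra_simps)
  then show ?thesis by simp
qed

lemma arith16:
  fixes m a b :: nat
  assumes "48 * a = (m+3)*(m+2)*(m+1)" "4*b = (m+3)*(m+2)"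
  shows "(m+3) mod 16 \<in> {0,1,8}"
proof -
  define k where "k = m mod 16"
  have k: "k < 16" by (simp add: k_def)
  have c1: "(m+j) mod 16 = (k+j) mod 16" for j by (simp add: k_def mod_add_left_eq)
  have h1: "((m+3)*(m+2)*(m+1)) mod 16 = ((k+3)*(k+2)*(k+1)) mod 16"
    by (intro mod_mult_cong c1)
  have h2: "((m+3)*(m+2)) mod 16 = ((k+3)*(k+2)) mod 16"
    by (intro mod_mult_cong c1)
  have p1: "(m+3)*(m+2)*(m+1) = 16*(3*a)" using assms(1) by simp
  have "((m+3)*(m+2)*(m+1)) mod 16 = 0" unfolding p1 by simp
  then have e1: "((k+3)*(k+2)*(k+1)) mod 16 = 0" using h1 by simp
  have p2: "(m+3)*(m+2) = 4*b" using assms(2) by simp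
  have "((m+3)*(m+2)) mod 4 = 0" unfolding p2 by simp
  moreover have "((m+3)*(m+2)) mod 4 = ((m+3)*(m+2)) mod 16 mod 4"
    by (simp add: mod_mod_cancel)
  moreover have "((k+3)*(k+2)) mod 4 = ((k+3)*(k+2)) mod 16 mod 4"
    by (simp add: mod_mod_cancel)
  ultimately have e2: "((k+3)*(k+2)) mod 4 = 0" using h2 by simp
  have "k \<in> set [0..<16]" using k by simp
  then have "k \<in> {0,1,2,3,4,5,6,7,8,9,10,11,12,13,14,15}" by (simp add: upt_rec numeral_eq_Suc)
  then have "(k+3) mod 16 \<in> {0,1,8}" using e1 e2 by auto
  then show ?thesis by (simp add: c1)
qed

theorem mainTheorem6:
  fixes V :: "'a set" and E :: "'a \<Rightarrow> 'a \<Rightarrow> bool"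
  assumes "simple_graph V E" and "card V \<ge> 3" and "three_symmetric V E"
  shows "card V mod 16 \<in> {0, 1, 8} \<and> \<not> (3 \<le> card V \<and> card V \<le> 7)"
proof -
  define n where "n = card V"
  have fin: "finite V" using assms(1) unfolding simple_graph_def by auto
  have sym: "\<forall>x\<in>V. \<forall>y\<in>V. E x y \<longrightarrow> E y x" and irr: "\<forall>x\<in>V. \<not>E x x"
    using assms(1) unfolding simple_graph_def by auto
  define T where "T = {S. S \<subseteq> V \<and> card S = 3}"
  define N where "N = n choose 3"
  have cardT: "card T = N" unfolding T_def N_def n_def using n_subsets[OF fin] by simp
  have finT: "finite T" unfolding T_def using fin by simp
  have Npos: "N > 0" unfolding N_def n_def using assms(2) by simp
  define I where "I F = {S. S \<subseteq> V \<and> card S = 3 \<and> induced_iso E S V3 F}" for F :: "nat \<Rightarrow> nat \<Rightarrow> bool"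
  have IT: "I F \<subseteq> T" for F unfolding I_def T_def by auto
  have dens: "density V3 F V E = real (card (I F)) / real N" for F
    unfolding density_def I_def N_def n_def by simp
  have cnt: "c * real (card (I F)) = real N"
    if "density V3 F V E = 1 / c" "c > 0" for F c
    using that Npos unfolding dens by (simp add: field_simps)
  have "8 * real (card (I K3_edges)) = real N"
    by (rule cnt) (use assms(3) in \<open>auto simp: three_symmetric_def\<close>)
  then have c3: "8 * card (I K3_edges) = N" by linarith
  have "(8/3) * real (card (I P3_edges)) = real N"
    by (rule cnt) (use assms(3) in \<open>auto simp: three_symmetric_def\<close>)
  then have c2: "8 * card (I P3_edges) = 3 * N" by linarith
  have "(8/3) * real (card (I K2K1_edges)) = real N"
    by (rule cnt) (use assms(3) in \<open>auto simp: three_symmetric_def\<close>)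
  then have c1: "8 * card (I K2K1_edges) = 3 * N" by linarith
  have "8 * real (card (I empty_edges)) = real N"
    by (rule cnt) (use assms(3) in \<open>auto simp: three_symmetric_def\<close>)
  then have c0: "8 * card (I empty_edges) = N" by linarith
  have ecI: "ecount E S = ecount F V3" if "S \<in> I F" for S F
    using that iso_ecount unfolding I_def by blast
  have finI: "finite (I F)" for F using finT IT finite_subset by blast
  have disj: "I F \<inter> I G = {}" if "ecount F V3 \<noteq> ecount G V3" for F G
    using that ecI by (metis disjoint_iff)
  have d1: "I K3_edges \<inter> I P3_edges = {}" by (rule disj) (simp add: ec_K3 ec_P3)
  have d2: "(I K3_edges \<union> I P3_edges) \<inter> I K2K1_edges = {}"
    using disj[of K3_edges K2K1_edges] disj[of P3_edges K2K1_edges]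
    by (simp add: Int_Un_distrib2 ec_K3 ec_P3 ec_K2K1)
  have d3: "(I K3_edges \<union> I P3_edges \<union> I K2K1_edges) \<inter> I empty_edges = {}"
    using disj[of K3_edges empty_edges] disj[of P3_edges empty_edges] disj[of K2K1_edges empty_edges]
    by (simp add: Int_Un_distrib2 ec_K3 ec_P3 ec_K2K1 ec_empty)
  define U where "U = I K3_edges \<union> I P3_edges \<union> I K2K1_edges \<union> I empty_edges"
  have "card U = card (I K3_edges) + card (I P3_edges) + card (I K2K1_edges) + card (I empty_edges)"
    unfolding U_def using d1 d2 d3 finI by (simp add: card_Un_disjoint)
  then have "card U = card T" using c0 c1 c2 c3 cardT by linarith
  moreover have "U \<subseteq> T" unfolding U_def using IT by auto
  ultimately have UT: "U = T" using finT card_subset_eq by blast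
  have sumI: "(\<Sum>S\<in>I F. ecount E S) = card (I F) * ecount F V3" for F
    using ecI by simp
  have "(\<Sum>S\<in>T. ecount E S) = (\<Sum>S\<in>U. ecount E S)" by (simp add: UT)
  also have "\<dots> = card (I K3_edges) * 6 + card (I P3_edges) * 4 + card (I K2K1_edges) * 2"
    unfolding U_def using d1 d2 d3 finI
    by (simp add: sum.union_disjoint sumI ec_K3 ec_P3 ec_K2K1 ec_empty)
  finally have sumT: "(\<Sum>S\<in>T. ecount E S) = 3 * N" using c1 c2 c3 by linarith
  define A where "A = {p \<in> V \<times> V. E (fst p) (snd p)}"
  have finA: "finite A" unfolding A_def using fin by auto
  have "(\<Sum>S\<in>T. ecount E S) = (\<Sum>S\<in>T. \<Sum>p\<in>A. if p \<in> S \<times> S then 1 else 0)"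
  proof (rule sum.cong[OF refl])
    fix S assume "S \<in> T"
    then have "{p \<in> S \<times> S. E (fst p) (snd p)} = {p \<in> A. p \<in> S \<times> S}"
      unfolding T_def A_def by auto
    then show "ecount E S = (\<Sum>p\<in>A. if p \<in> S \<times> S then 1 else 0)"
      unfolding ecount_def using finA by (simp add: sum.inter_filter[symmetric])
  qed
  also have "\<dots> = (\<Sum>p\<in>A. \<Sum>S\<in>T. if p \<in> S \<times> S then 1 else 0)" by (rule sum.swap)
  also have "\<dots> = (\<Sum>p\<in>A. n - 2)"
  proof (rule sum.cong[OF refl])
    fix p assume p: "p \<in> A"
    then obtain x y where xy: "p = (x,y)" "x \<in> V" "y \<in> V" "E x y" unfolding A_def by auto
    have "x \<noteq> y" using xy irr by auto
    then have "card {S \<in> T. p \<in> S \<times> S} = n - 2"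
      unfolding T_def n_def xy(1) using count3[OF fin xy(2,3)] by simp
    then show "(\<Sum>S\<in>T. if p \<in> S \<times> S then 1 else 0) = n - 2"
      using finT by (simp add: sum.inter_filter[symmetric])
  qed
  also have "\<dots> = card A * (n - 2)" by simp
  finally have DA: "card A * (n - 2) = 3 * N" using sumT by simp
  obtain b where b: "card A = 2 * b" using even_edges[OF fin sym irr] unfolding A_def by blast
  obtain m where m: "n = m + 3" using assms(2) unfolding n_def by (metis add.commute le_Suc_ex)
  have N6: "6 * N = (m+3)*(m+2)*(m+1)" unfolding N_def m by (rule choose3)
  have "(2 * card A) * (m+1) = (m+3)*(m+2)*(m+1)" using DA N6 m by simp
  moreover have nz: "m+1 \<noteq> 0" by simp
  ultimately have "2 * card A = (m+3)*(m+2)" using mult_right_cancel[OF nz] by blast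
  then have e: "4 * b = (m+3)*(m+2)" using b by simp
  have "48 * card (I K3_edges) = (m+3)*(m+2)*(m+1)" using c3 N6 by linarith
  from arith16[OF this e] have "n mod 16 \<in> {0,1,8}" using m by simp
  then have "n mod 16 = 0 \<or> n mod 16 = 1 \<or> n mod 16 = 8" by simp
  then have "\<not> (3 \<le> n \<and> n \<le> 7)" by presburger
  then show ?thesis using \<open>n mod 16 \<in> {0,1,8}\<close> unfolding n_def by blast
qed

end
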